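(* Let $f(X)=AX+\frac{C}{X}$. Suppose there exist nonzero integers $A,C$ and a nonzero rational number $z$ such that the quartic curve \[C_4:\ v^2=-4A^3Cz^4y^4+(A^4z^8+4A^3Cz^6-2A^2C^2z^4+4AC^3z^2+C^4)y^2-4AC^3z^4\] has infinitely many rational points $(y,v)$. Then the equation $f(x)f(y)=f(z)^2$ has infinitely many nontrivial rational solutions $(x,y,z)$.
   Context: A solution $(x,y,z)$ (with $x,y,z$ nonzero rationals, so that $f$ is defined) of $f(x)f(y)=f(z)^2$ is called nontrivial if $f(x)\neq f(y)$ and $f(z)\neq 0$. *)

theory Defs
  imports Complex_Main
begin

definition fAC :: "int \<Rightarrow> int \<Rightarrow> rat \<Rightarrow> rat" where
  "fAC A C X = of_int A * X + of_int C / X"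

definition quartic_points :: "int \<Rightarrow> int \<Rightarrow> rat \<Rightarrow> (rat \<times> rat) set" where
  "quartic_points A C z = {(y, v). let a = (of_int A :: rat); c = (of_int C :: rat) in
     v^2 = - 4 * a^3 * c * z^4 * y^4
           + (a^4 * z^8 + 4 * a^3 * c * z^6 - 2 * a^2 * c^2 * z^4 + 4 * a * c^3 * z^2 + c^4) * y^2
           - 4 * a * c^3 * z^4}"

definition nontrivial_solutions :: "int \<Rightarrow> int \<Rightarrow> (rat \<times> rat \<times> rat) set" where
  "nontrivial_solutions A C = {(x, y, z). x \<noteq> 0 \<and> y \<noteq> 0 \<and> z \<noteq> 0 \<and>
     fAC A C x * fAC A C y = (fAC A C z)^2 \<and> fAC A C x \<noteq> fAC A C y \<and> fAC A C z \<noteq> 0}"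

end

theory Submission
  imports Defs
begin


lemma quad_finite:
  fixes a b c :: rat assumes "a \<noteq> 0"
  shows "finite {y. a*y^2 + b*y + c = 0}"
proof (cases "{y. a*y^2 + b*y + c = 0} = {}")
  case True then show ?thesis by simp
next
  case False
  then obtain y1 where y1: "a*y1^2 + b*y1 + c = 0" by auto
  have "{y. a*y^2 + b*y + c = 0} \<subseteq> {y1, -y1 - b/a}"
  proof
    fix y assume "y \<in> {y. a*y^2 + b*y + c = 0}"
    then have "a*y^2 + b*y + c = 0" by simp
    with y1 have "(y - y1) * (a*(y+y1) + b) = 0" by (simp add: algebra_simps power2_eq_square)
    then have "y = y1 \<or> a*(y+y1) + b = 0" by simp
    then show "y \<in> {y1, -y1 - b/a}" using assms by (auto simp: field_simps)
  qed
  then show ?thesis by (rule finite_subset) simp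
qed

lemma sq_finite: "finite {v::rat. v^2 = k}"
  using quad_finite[of 1 0 "-k"] by simp

lemma infinite_image_finite_fibers:
  assumes "infinite S" and "\<And>u. finite {x\<in>S. h x = u}"
  shows "infinite (h ` S)"
proof
  assume "finite (h ` S)"
  then have "finite (\<Union>u\<in>h ` S. {x\<in>S. h x = u})" using assms(2) by blast
  moreover have "S \<subseteq> (\<Union>u\<in>h ` S. {x\<in>S. h x = u})" by blast
  ultimately show False using assms(1) finite_subset by blast
qed



lemma nondeg_alg:
  fixes a c z y v :: rat
  assumes a: "a \<noteq> 0" and c: "c \<noteq> 0" and z: "z \<noteq> 0" and y: "y \<noteq> 0"
    and ay: "a*y^2 + c \<noteq> 0"
    and q: "v^2 = - 4 * a^3 * c * z^4 * y^4
           + (a^4 * z^8 + 4 * a^3 * c * z^6 - 2 * a^2 * c^2 * z^4 + 4 * a * c^3 * z^2 + c^4) * y^2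
           - 4 * a * c^3 * z^4"
  defines "t \<equiv> (a*z^2+c)^2 * y / (z^2 * (a*y^2+c))"
  defines "s \<equiv> v / (z^2 * (a*y^2+c))"
  shows "s^2 = t^2 - 4*a*c"
proof -
  have d: "z^2 * (a*y^2+c) \<noteq> 0" using z ay by simp
  have "s^2 * (z^2 * (a*y^2+c))^2 = v^2" unfolding s_def using d by (simp add: power_divide)
  moreover have "(t^2 - 4*a*c) * (z^2 * (a*y^2+c))^2 = (a*z^2+c)^4 * y^2 - 4*a*c*(z^2 * (a*y^2+c))^2"
  proof -
    have "t * (z^2 * (a*y^2+c)) = (a*z^2+c)^2 * y" unfolding t_def using d by simp
    moreover have "(t^2 - 4*a*c) * (z^2 * (a*y^2+c))^2 = (t * (z^2 * (a*y^2+c)))^2 - 4*a*c*(z^2 * (a*y^2+c))^2"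
      by algebra
    moreover have "((a*z^2+c)^2 * y)^2 = (a*z^2+c)^4 * y^2" by algebra
    ultimately show ?thesis by simp
  qed
  moreover have "(a*z^2+c)^4 * y^2 - 4*a*c*(z^2 * (a*y^2+c))^2 = v^2" unfolding q by algebra
  ultimately have "s^2 * (z^2 * (a*y^2+c))^2 = (t^2 - 4*a*c) * (z^2 * (a*y^2+c))^2" by simp
  then show ?thesis using d by simp
qed



lemma nondeg_case:
  fixes A C :: int and z :: rat
  assumes A0: "A \<noteq> 0" and C0: "C \<noteq> 0" and z0: "z \<noteq> 0"
    and fz0: "fAC A C z \<noteq> 0"
    and inf: "infinite (quartic_points A C z)"
  shows "infinite (nontrivial_solutions A C)"
proof -
  define a :: rat where "a = of_int A"
  define c :: rat where "c = of_int C"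
  define fz where "fz = fAC A C z"
  have a0: "a \<noteq> 0" and c0: "c \<noteq> 0" using A0 C0 by (auto simp: a_def c_def)
  have fAC_eq: "\<And>X. X \<noteq> 0 \<Longrightarrow> fAC A C X = (a*X^2 + c)/X"
    by (simp add: fAC_def a_def c_def field_simps power2_eq_square)
  define qp where "qp = (\<lambda>y::rat. - 4 * a^3 * c * z^4 * y^4
           + (a^4 * z^8 + 4 * a^3 * c * z^6 - 2 * a^2 * c^2 * z^4 + 4 * a * c^3 * z^2 + c^4) * y^2
           - 4 * a * c^3 * z^4)"
  have Q: "quartic_points A C z = {(y,v). v^2 = qp y}"
    by (simp add: quartic_points_def qp_def a_def c_def Let_def)
  define Yb where "Yb = {0} \<union> {y. a*y^2 + 0*y + c = 0} \<union> {y. a*y^2 + (-fz)*y + c = 0}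
        \<union> {y. a*y^2 + fz*y + c = 0}"
  have fYb: "finite Yb" unfolding Yb_def by (intro finite_UnI finite.intros quad_finite a0)
  define G where "G = {p \<in> quartic_points A C z. fst p \<notin> Yb}"
  have "quartic_points A C z - G \<subseteq> (\<Union>y\<in>Yb. {y} \<times> {v. v^2 = qp y})"
    unfolding G_def Q by auto
  moreover have "finite (\<Union>y\<in>Yb. {y} \<times> {v. v^2 = qp y})"
    using fYb sq_finite by blast
  ultimately have "finite (quartic_points A C z - G)" by (rule finite_subset)
  then have infG: "infinite G" using inf
    by (metis Diff_infinite_finite Diff_Diff_Int Int_absorb2 G_def mem_Collect_eq subsetI)
  define den where "den = (\<lambda>y::rat. z^2 * (a*y^2+c))"
  define tt where "tt = (\<lambda>y::rat. (a*z^2+c)^2 * y / den y)"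
  define h where "h = (\<lambda>(y::rat, v::rat). ((tt y + v / den y)/(2*a), y, z))"
  have good: "y \<noteq> 0 \<and> a*y^2 + c \<noteq> 0 \<and> fAC A C y \<noteq> fz \<and> fAC A C y \<noteq> - fz \<and> v^2 = qp y"
    if "(y,v) \<in> G" for y v
  proof -
    have yb: "y \<notin> Yb" and q: "v^2 = qp y" using that unfolding G_def Q by auto
    have y0: "y \<noteq> 0" using yb unfolding Yb_def by auto
    have ay: "a*y^2 + c \<noteq> 0" using yb unfolding Yb_def by auto
    have "fAC A C y \<noteq> fz"
    proof
      assume "fAC A C y = fz"
      then have "(a*y^2+c)/y = fz" using fAC_eq y0 by simp
      then have "a*y^2 + (-fz)*y + c = 0" using y0 by (simp add: field_simps)
      then show False using yb unfolding Yb_def by auto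
    qed
    moreover have "fAC A C y \<noteq> -fz"
    proof
      assume "fAC A C y = -fz"
      then have "(a*y^2+c)/y = -fz" using fAC_eq y0 by simp
      then have "a*y^2 + fz*y + c = 0" using y0 by (simp add: field_simps)
      then show False using yb unfolding Yb_def by auto
    qed
    ultimately show ?thesis using y0 ay q by auto
  qed
  have hsol: "h p \<in> nontrivial_solutions A C" if "p \<in> G" for p
  proof -
    obtain y v where p: "p = (y,v)" by (cases p)
    from good[of y v] that p have y0: "y \<noteq> 0" and ay: "a*y^2 + c \<noteq> 0"
      and n1: "fAC A C y \<noteq> fz" and n2: "fAC A C y \<noteq> -fz" and q: "v^2 = qp y" by auto
    define s where "s = v / den y"
    define x where "x = (tt y + s)/(2*a)"
    have hp: "h p = (x, y, z)" by (simp add: h_def p x_def s_def)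
    have s2: "s^2 = (tt y)^2 - 4*a*c"
      using nondeg_alg[OF a0 c0 z0 y0 ay q[unfolded qp_def]] by (simp add: s_def tt_def den_def)
    have quad: "a*x^2 - tt y * x + c = 0"
    proof -
      have "a*x^2 - tt y * x + c = (s^2 - (tt y)^2 + 4*a*c)/(4*a)"
        unfolding x_def using a0 by (simp add: field_simps power2_eq_square)
      then show ?thesis using s2 by simp
    qed
    have x0: "x \<noteq> 0" using quad c0 by auto
    have fx: "fAC A C x = tt y" using quad x0 fAC_eq[OF x0]
      by (simp add: field_simps power2_eq_square)
    have fy: "fAC A C y = (a*y^2+c)/y" using fAC_eq y0 by simp
    have fzE: "fz = (a*z^2+c)/z" using fAC_eq z0 fz_def by simp
    have fy0: "fAC A C y \<noteq> 0" using fy y0 ay by simp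
    have tteq: "tt y = fz^2 / fAC A C y"
      unfolding tt_def den_def fy fzE using y0 z0 ay by (simp add: field_simps power2_eq_square)
    have "fAC A C x * fAC A C y = fz^2" using fx tteq fy0 by simp
    moreover have "fAC A C x \<noteq> fAC A C y"
    proof
      assume "fAC A C x = fAC A C y"
      then have "fz^2 = (fAC A C y)^2" using tteq fx fy0 by (simp add: field_simps power2_eq_square)
      then have "fAC A C y = fz \<or> fAC A C y = -fz" by (metis power2_eq_iff)
      then show False using n1 n2 by auto
    qed
    ultimately show ?thesis unfolding hp nontrivial_solutions_def using x0 y0 z0 fz0 fz_def by auto
  qed
  have "inj_on h G"
  proof (rule inj_onI)
    fix p p' assume "p \<in> G" "p' \<in> G" "h p = h p'"
    obtain y v where p: "p = (y,v)" by (cases p)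
    obtain y' v' where p': "p' = (y',v')" by (cases p')
    from `p \<in> G` good p have ay: "a*y^2 + c \<noteq> 0" by auto
    from `h p = h p'` have yy: "y' = y" and e: "(tt y + v / den y)/(2*a) = (tt y + v' / den y)/(2*a)"
      by (auto simp: h_def p p')
    have "den y \<noteq> 0" unfolding den_def using z0 ay by simp
    with e a0 have "v = v'" by (simp add: field_simps)
    then show "p = p'" using p p' yy by simp
  qed
  then have "infinite (h ` G)" using infG finite_imageD by blast
  moreover have "h ` G \<subseteq> nontrivial_solutions A C" using hsol by blast
  ultimately show ?thesis using finite_subset by blast
qed



definition KK :: int where "KK = 194481"
definition DD :: int where "DD = 251038"
definition cE :: "rat \<Rightarrow> rat" where
  "cE Z = (Z - 2*of_int KK)*(Z + 2*of_int KK)*(Z + of_int DD)"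
definition dbl :: "rat \<Rightarrow> rat" where
  "dbl Z = (3*Z^2 + 2*of_int DD*Z - 4*(of_int KK)^2)^2/(4*cE Z) - of_int DD - 2*Z"
definition Good :: "nat \<Rightarrow> rat \<Rightarrow> bool" where
  "Good m Z \<longleftrightarrow> (\<exists>a b::int. odd a \<and> odd b \<and> Z = of_int a / (4^m * of_int b))"

lemma Good_nonint:
  assumes "Good m Z" "m \<ge> 1" shows "Z \<noteq> of_int n"
proof
  assume Zn: "Z = of_int n"
  obtain a b :: int where ab: "odd a" "odd b" "Z = of_int a / (4^m * of_int b)"
    using assms(1) Good_def by auto
  have b0: "(of_int b :: rat) \<noteq> 0" using ab(2) by (auto)
  have "of_int a = (of_int (n * 4^m * b) :: rat)" using ab(3) Zn b0 by (simp add: field_simps)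
  then have "a = n * 4^m * b" by (simp only: of_int_eq_iff)
  moreover have "even (n * 4^m * b)" using assms(2) by (simp add: even_mult_iff)
  ultimately show False using ab(1) by simp
qed

lemma cE_nz: assumes "Good m Z" "m \<ge> 1" shows "cE Z \<noteq> 0" "Z + of_int DD \<noteq> 0"
proof -
  have 1: "Z \<noteq> of_int (2*KK)" "Z \<noteq> of_int (-2*KK)" "Z \<noteq> of_int (-DD)"
    using Good_nonint[OF assms] by blast+
  then have "Z - 2*of_int KK \<noteq> 0" "Z + 2*of_int KK \<noteq> 0" "Z + of_int DD \<noteq> 0" by auto
  then show "cE Z \<noteq> 0" unfolding cE_def by simp
  show "Z + of_int DD \<noteq> 0" using 1(3) by (auto simp: algebra_simps)
qed

lemma dbl_Good:
  assumes "Good m Z" "m \<ge> 1" shows "Good (Suc m) (dbl Z)"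
proof -
  obtain a b :: int where ab: "odd a" "odd b" "Z = of_int a / (4^m * of_int b)"
    using assms(1) Good_def by auto
  define t :: int where "t = 4^m"
  have et: "even t" using assms(2) unfolding t_def by (simp add: even_mult_iff)
  define P where "P = 3*a^2 + t * (2*DD*a*b - 4*KK^2*t*b^2)"
  define Kc where "Kc = a^3 + t*(DD*a^2*b - 4*KK^2*a*t*b^2 - 4*KK^2*DD*t^2*b^3)"
  have oP: "odd P" unfolding P_def using ab(1) et by (simp add: even_mult_iff)
  have oK: "odd Kc" unfolding Kc_def using ab(1) et by (simp add: even_mult_iff)
  define a' where "a' = P^2 - 4*Kc*(DD*t*b + 2*a)"
  define b' where "b' = b * Kc"
  have oa': "odd a'" unfolding a'_def using oP by (simp add: even_mult_iff)
  have ob': "odd b'" unfolding b'_def using oK ab(2) by simp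
  have t0: "(of_int t :: rat) \<noteq> 0" unfolding t_def by simp
  have b0: "(of_int b :: rat) \<noteq> 0" using ab(2) by auto
  have K0: "(of_int Kc :: rat) \<noteq> 0" using oK by auto
  have Z: "Z = of_int a / (of_int t * of_int b)" using ab(3) unfolding t_def by simp
  have cEZ: "cE Z = of_int Kc / (of_int t * of_int b)^3"
    unfolding cE_def Z Kc_def using t0 b0
    by (simp add: field_simps power2_eq_square power3_eq_cube)
  have PZ: "3*Z^2 + 2*of_int DD*Z - 4*(of_int KK)^2 = of_int P / (of_int t * of_int b)^2"
    unfolding Z P_def using t0 b0
    by (simp add: field_simps power2_eq_square)
  have gen: "(PP/q^2)^2/(4*(KQ/q^3)) - d - 2*(aa/q) = (PP^2 - 4*KQ*(d*q + 2*aa))/(4*q*KQ)"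
    if "q \<noteq> 0" "KQ \<noteq> 0" for PP KQ q d aa :: rat
    using that by (simp add: field_simps power2_eq_square power3_eq_cube)
  have "dbl Z = of_int a' / (4 * of_int t * of_int b')"
    unfolding dbl_def PZ cEZ
    apply (subst Z)
    apply (subst gen)
    using t0 b0 K0 by (auto simp: a'_def b'_def algebra_simps)
  then have "dbl Z = of_int a' / (4^(Suc m) * of_int b')" unfolding t_def by simp
  then show ?thesis unfolding Good_def using oa' ob' by blast
qed

lemma dbl_curve:
  assumes "W^2 = cE Z" "W \<noteq> 0" shows "\<exists>W'. W'^2 = cE (dbl Z)"
proof -
  define l where "l = (3*Z^2 + 2*of_int DD*Z - 4*(of_int KK)^2)/(2*W)"
  define x3 where "x3 = l^2 - of_int DD - 2*Z"
  have cW: "cE Z = W^2" using assms by simp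
  have x3e: "x3 = dbl Z" unfolding x3_def l_def dbl_def cW using assms(2)
    by (simp add: power_divide power2_eq_square field_simps)
  have lW: "2*l*W = 3*Z^2 + 2*of_int DD*Z - 4*(of_int KK)^2" unfolding l_def using assms(2) by simp
  have "cE x3 - (W + l*(x3 - Z))^2 = (cE Z - W^2) + ((3*Z^2 + 2*of_int DD*Z - 4*(of_int KK)^2) - 2*l*W)*(x3 - Z)
       + (x3 - Z)^2 * (x3 - (l^2 - of_int DD - 2*Z))"
    unfolding cE_def by algebra
  then have "cE x3 = (W + l*(x3 - Z))^2" using cW lW x3_def by simp
  then show ?thesis using x3e by metis
qed



lemma uR:
  assumes W: "W^2 = cE Z" and ZD: "Z + of_int DD \<noteq> 0"
  shows "(Z/of_int KK - 2*(W/(882*(Z + of_int DD)))^2)^2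
        = 4*(W/(882*(Z + of_int DD)))^4 + (4*of_int DD/of_int KK)*(W/(882*(Z + of_int DD)))^2 + 4"
proof -
  define u where "u = W/(882*(Z + of_int DD))"
  have K: "(of_int KK :: rat) = 194481" "(of_int DD :: rat) = 251038" by (simp_all add: KK_def DD_def)
  have u2: "u^2 * (4*194481*(Z + 251038)) = Z^2 - 4*194481^2"
  proof -
    have ZD': "Z + 251038 \<noteq> 0" using ZD K by simp
    have "u^2 * (4*194481*(Z + 251038)) = W^2/(Z+251038)"
    proof -
      have gen: "V/(k*y^2) * (k*y) = V/y" if "y \<noteq> 0" "k \<noteq> 0" for V k y :: rat
        using that by (simp add: field_simps power2_eq_square)
      have e: "(882::rat)^2 = 777924" by simp
      have "u^2 = W^2/(777924*(Z+251038)^2)" unfolding u_def K by (simp only: power_divide power_mult_distrib e)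
      then show ?thesis using gen[OF ZD', of 777924 "W^2"] by simp
    qed
    also have "W^2 = (Z^2 - 4*194481^2)*(Z+251038)" using W unfolding cE_def K
      by (simp add: algebra_simps power2_eq_square)
    finally show ?thesis using ZD' by simp
  qed
  have "(Z/194481 - 2*u^2)^2 - (4*u^4 + (4*251038/194481)*u^2 + 4)
       = ((Z^2 - 4*194481^2) - u^2 * (4*194481*(Z + 251038)))/194481^2"
    by (simp add: field_simps power2_eq_square power4_eq_xxxx)
  also have "\<dots> = 0" using u2 by simp
  finally have fin: "(Z/194481 - 2*u^2)^2 = 4*u^4 + (4*251038/194481)*u^2 + 4" by simp
  show ?thesis using fin unfolding K u_def .
qed

lemma gsol:
  fixes R u s :: rat
  assumes R: "R^2 = 4*u^4 + (s^4-8)*u^2 + 4" and u0: "u \<noteq> 0" and u1: "u^2 \<noteq> 1"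
  defines "b \<equiv> s^2*u/(u^2-1)"
  defines "y \<equiv> (b + R/(u^2-1))/2"
  shows "y \<noteq> 0 \<and> y - 1/y = b"
proof -
  have u1': "u^2 - 1 \<noteq> 0" using u1 by simp
  define d where "d = R/(u^2-1)"
  have "d^2 * (u^2-1)^2 = (b^2 + 4) * (u^2-1)^2"
  proof -
    have "d^2 * (u^2-1)^2 = R^2" unfolding d_def using u1' by (simp add: power_divide)
    moreover have "(b^2 + 4) * (u^2-1)^2 = s^4*u^2 + 4*(u^2-1)^2"
    proof -
      have "b*(u^2-1) = s^2*u" unfolding b_def using u1' by simp
      then have "(b*(u^2-1))^2 = (s^2*u)^2" by simp
      then show ?thesis by (simp add: algebra_simps power2_eq_square power4_eq_xxxx)
    qed
    ultimately show ?thesis using R by (simp add: algebra_simps power2_eq_square power4_eq_xxxx)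
  qed
  then have d2: "d^2 = b^2 + 4" using u1' by simp
  have yq: "y^2 - b*y - 1 = 0" unfolding y_def d_def[symmetric] using d2
    by (simp add: field_simps power2_eq_square)
  then have y0: "y \<noteq> 0" by auto
  have "y - 1/y = (y^2 - 1)/y" using y0 by (simp add: field_simps power2_eq_square)
  also have "\<dots> = b" using yq y0 by (simp add: field_simps power2_eq_square)
  finally show ?thesis using y0 by simp
qed



lemma Good_unique: assumes "Good m Z" "Good m' Z" shows "m = m'"
proof (rule ccontr)
  assume ne: "m \<noteq> m'"
  obtain a b :: int where ab: "odd a" "odd b" "Z = of_int a / (4^m * of_int b)"
    using assms(1) Good_def by auto
  obtain a' b' :: int where ab': "odd a'" "odd b'" "Z = of_int a' / (4^m' * of_int b')"
    using assms(2) Good_def by auto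
  have b0: "(of_int b::rat) \<noteq> 0" "(of_int b'::rat) \<noteq> 0" using ab(2) ab'(2) by auto
  have "(of_int a / (4^m * of_int b) :: rat) = of_int a' / (4^m' * of_int b')" using ab ab' by simp
  then have "(of_int (a * 4^m' * b') :: rat) = of_int (a' * 4^m * b)" using b0
    by (simp add: field_simps)
  then have e: "a * 4^m' * b' = a' * 4^m * b" by (simp only: of_int_eq_iff)
  show False
  proof (cases "m < m'")
    case True
    then have "(4::int)^m' = 4^m * 4^(m'-m)" by (simp add: power_add[symmetric])
    with e have "4^m * (a * b' * 4^(m'-m)) = 4^m * (a' * b)" by (simp add: algebra_simps)
    then have "a * b' * 4^(m'-m) = a' * b" by simp
    moreover have "even (a * b' * 4^(m'-m))" using True by simp
    ultimately show False using ab(1,2) ab'(1,2) by simp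
  next
    case False
    then have lt: "m' < m" using ne by simp
    then have "(4::int)^m = 4^m' * 4^(m-m')" by (simp add: power_add[symmetric])
    with e have "4^m' * (a' * b * 4^(m-m')) = 4^m' * (a * b')" by (simp add: algebra_simps)
    then have "a' * b * 4^(m-m') = a * b'" by simp
    moreover have "even (a' * b * 4^(m-m'))" using lt by simp
    ultimately show False using ab(1,2) ab'(1,2) by simp
  qed
qed

definition Z0 :: rat where "Z0 = 53659701697/133956"
definition Zs :: "nat \<Rightarrow> rat" where "Zs n = (dbl ^^ n) Z0"

lemma Z0_ok: "Good 1 Z0" "(3789976373494325/49027896)^2 = cE Z0"
proof -
  show "Good 1 Z0" unfolding Good_def Z0_def
    by (rule exI[of _ 53659701697], rule exI[of _ 33489]) simp
  show "(3789976373494325/49027896)^2 = cE Z0" by (simp add: cE_def Z0_def KK_def DD_def power2_eq_square)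
qed

lemma Zs_ok: "Good (Suc n) (Zs n) \<and> (\<exists>W. W^2 = cE (Zs n))"
proof (induction n)
  case 0 then show ?case using Z0_ok by (auto simp: Zs_def)
next
  case (Suc n)
  then obtain W where W: "W^2 = cE (Zs n)" and G: "Good (Suc n) (Zs n)" by auto
  have "cE (Zs n) \<noteq> 0" using cE_nz(1)[OF G] by simp
  then have "W \<noteq> 0" using W by auto
  from dbl_curve[OF W this] have "\<exists>W'. W'^2 = cE (dbl (Zs n))" .
  moreover have "Good (Suc (Suc n)) (dbl (Zs n))" using dbl_Good[OF G] by simp
  ultimately show ?case by (simp add: Zs_def)
qed

lemma Zs_inj: "inj Zs"
proof (rule injI)
  fix m n assume "Zs m = Zs n"
  then show "m = n" using Good_unique Zs_ok[of m] Zs_ok[of n] by (metis Suc_inject)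
qed

lemma infinite_U: "infinite ((\<lambda>Z. (SOME W. W^2 = cE Z)/(882*(Z + of_int DD))) ` range Zs)"
proof (rule infinite_image_finite_fibers)
  show "infinite (range Zs)" using Zs_inj finite_imageD infinite_UNIV_nat by blast
next
  fix u
  define B :: rat where "B = 4*of_int DD/of_int KK"
  have K0: "(of_int KK :: rat) \<noteq> 0" by (simp add: KK_def)
  have "{Z \<in> range Zs. (SOME W. W^2 = cE Z)/(882*(Z + of_int DD)) = u}
     \<subseteq> {Z. (1/(of_int KK)^2)*Z^2 + (-4*u^2/of_int KK)*Z + (-B*u^2 - 4) = 0}"
  proof
    fix Z assume "Z \<in> {Z \<in> range Zs. (SOME W. W^2 = cE Z)/(882*(Z + of_int DD)) = u}"
    then obtain n where Zn: "Z = Zs n" and uu: "(SOME W. W^2 = cE Z)/(882*(Z + of_int DD)) = u" by auto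
    have "\<exists>W. W^2 = cE Z" using Zs_ok Zn by auto
    then have W: "(SOME W. W^2 = cE Z)^2 = cE Z" by (rule someI_ex)
    have ZD: "Z + of_int DD \<noteq> 0" using cE_nz(2) Zs_ok[of n] Zn by auto
    from uR[OF W ZD] uu have e: "(Z/of_int KK - 2*u^2)^2 = 4*u^4 + B*u^2 + 4" by (simp add: B_def)
    have "(1/(of_int KK)^2)*Z^2 + (-4*u^2/of_int KK)*Z + (-B*u^2 - 4)
        = (Z/of_int KK - 2*u^2)^2 - (4*u^4 + B*u^2 + 4)"
      using K0 by (simp add: field_simps power2_eq_square power4_eq_xxxx)
    then show "Z \<in> {Z. (1/(of_int KK)^2)*Z^2 + (-4*u^2/of_int KK)*Z + (-B*u^2 - 4) = 0}"
      using e by simp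
  qed
  moreover have "finite {Z. (1/(of_int KK)^2)*Z^2 + (-4*u^2/of_int KK)*Z + (-B*u^2 - 4) = 0}"
    by (rule quad_finite) (use K0 in simp)
  ultimately show "finite {Z \<in> range Zs. (SOME W. W^2 = cE Z)/(882*(Z + of_int DD)) = u}"
    using finite_subset by blast
qed



lemma deg_case:
  fixes A C :: int and z :: rat
  assumes A0: "A \<noteq> 0" and C0: "C \<noteq> 0" and z0: "z \<noteq> 0" and fz0: "fAC A C z = 0"
  shows "infinite (nontrivial_solutions A C)"
proof -
  define a :: rat where "a = of_int A"
  define c :: rat where "c = of_int C"
  have a0: "a \<noteq> 0" using A0 by (simp add: a_def)
  have ca: "c = -a*z^2" using fz0 z0 unfolding fAC_def a_def c_def
    by (simp add: field_simps power2_eq_square)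
  have fscale: "fAC A C (z*t) = a*z*(t - 1/t)" if "t \<noteq> 0" for t
    unfolding fAC_def a_def[symmetric] c_def[symmetric] ca using that z0
    by (simp add: field_simps power2_eq_square)
  define s :: rat where "s = 40/21"
  define uf where "uf = (\<lambda>Z. (SOME W. W^2 = cE Z)/(882*(Z + of_int DD)))"
  define U where "U = uf ` range Zs"
  have infU: "infinite U" unfolding U_def uf_def by (rule infinite_U)
  define Bad where "Bad = {0} \<union> {u::rat. 1*u^2 + 0*u + -1 = 0} \<union> {u. 1*u^2 + (-s)*u + -1 = 0}
      \<union> {u. 1*u^2 + s*u + -1 = 0}"
  have fB: "finite Bad" unfolding Bad_def by (intro finite_UnI finite.intros quad_finite) simp_all
  define U' where "U' = U - Bad"
  have infU': "infinite U'" unfolding U'_def using infU fB by simp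
  define qq where "qq = (\<lambda>u::rat. 4*u^4 + (s^4-8)*u^2 + 4)"
  have sB: "s^4 - 8 = 4*of_int DD/of_int KK" by (simp add: s_def DD_def KK_def power_divide)
  have hasr: "\<exists>r. r^2 = qq u" if uU0: "u \<in> U" for u
  proof -
    obtain n where u: "u = uf (Zs n)" using uU0 unfolding U_def by blast
    define Z where "Z = Zs n"
    have "\<exists>W. W^2 = cE Z" using Zs_ok Z_def by auto
    then have W: "(SOME W. W^2 = cE Z)^2 = cE Z" by (rule someI_ex)
    have ZD: "Z + of_int DD \<noteq> 0" using cE_nz(2) Zs_ok[of n] Z_def by auto
    show ?thesis using uR[OF W ZD] u unfolding uf_def qq_def sB Z_def by blast
  qed
  define rf where "rf = (\<lambda>u. SOME r. r^2 = qq u)"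
  define bf where "bf = (\<lambda>u::rat. s^2*u/(u^2-1))"
  define yf where "yf = (\<lambda>u. (bf u + rf u/(u^2-1))/2)"
  define hh where "hh = (\<lambda>u. (z*u, z*yf u, z*(7/3::rat)))"
  have hsol: "hh u \<in> nontrivial_solutions A C" if "u \<in> U'" for u
  proof -
    have uU: "u \<in> U" and nb: "u \<notin> Bad" using that U'_def by auto
    have u0: "u \<noteq> 0" using nb Bad_def by auto
    have u1: "u^2 \<noteq> 1" using nb Bad_def by auto
    have r: "(rf u)^2 = qq u" unfolding rf_def using hasr[OF uU] by (rule someI_ex)
    from gsol[of "rf u" u s, OF r[unfolded qq_def] u0 u1]
    have y0: "yf u \<noteq> 0" and gy: "yf u - 1/yf u = bf u" unfolding yf_def bf_def by auto
    have u1': "u^2 - 1 \<noteq> 0" using u1 by simp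
    have prod: "(u - 1/u) * bf u = s^2" unfolding bf_def using u0 u1'
      by (simp add: field_simps power2_eq_square)
    have gw: "(7/3::rat) - 1/(7/3) = s" by (simp add: s_def)
    have fx: "fAC A C (z*u) = a*z*(u - 1/u)" using fscale u0 by simp
    have fy: "fAC A C (z*yf u) = a*z*bf u" using fscale[OF y0] gy by simp
    have "fAC A C (z*(7/3)) = a*z*((7/3) - 1/(7/3))" by (rule fscale) simp
    then have fw: "fAC A C (z*(7/3)) = a*z*s" by (simp only: gw)
    have "fAC A C (z*u) * fAC A C (z*yf u) = (a*z)^2 * ((u - 1/u) * bf u)"
      unfolding fx fy by (simp add: algebra_simps power2_eq_square)
    also have "\<dots> = (fAC A C (z*(7/3)))^2" unfolding prod fw by (simp add: power_mult_distrib)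
    finally have eq: "fAC A C (z*u) * fAC A C (z*yf u) = (fAC A C (z*(7/3)))^2" .
    have neq: "fAC A C (z*u) \<noteq> fAC A C (z*yf u)"
    proof
      assume "fAC A C (z*u) = fAC A C (z*yf u)"
      then have e: "u - 1/u = bf u" unfolding fx fy using a0 z0 by simp
      then have "(u - 1/u)^2 = s^2" using prod by (simp add: power2_eq_square)
      then have "u - 1/u = s \<or> u - 1/u = -s" by (metis power2_eq_iff)
      then show False
      proof
        assume "u - 1/u = s"
        then have "1*u^2 + (-s)*u + -1 = 0" using u0 by (simp add: field_simps power2_eq_square)
        then show False using nb Bad_def by auto
      next
        assume "u - 1/u = -s"
        then have "1*u^2 + s*u + -1 = 0" using u0 by (simp add: field_simps power2_eq_square)
        then show False using nb Bad_def by auto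
      qed
    qed
    have fw0: "fAC A C (z*(7/3)) \<noteq> 0" unfolding fw using a0 z0 by (simp add: s_def)
    show ?thesis unfolding hh_def nontrivial_solutions_def using eq neq fw0 u0 y0 z0 by auto
  qed
  have "inj_on hh U'" by (rule inj_onI) (use z0 in \<open>auto simp: hh_def\<close>)
  then have "infinite (hh ` U')" using infU' finite_imageD by blast
  moreover have "hh ` U' \<subseteq> nontrivial_solutions A C" using hsol by blast
  ultimately show ?thesis using finite_subset by blast
qed


theorem theorem1p4:
  fixes A C :: int and z :: rat
  assumes "A \<noteq> 0" and "C \<noteq> 0" and "z \<noteq> 0"
    and "infinite (quartic_points A C z)"
  shows "infinite (nontrivial_solutions A C)"
proof (cases "fAC A C z = 0")
  case True
  then show ?thesis using deg_case assms by blast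
next
  case False
  then show ?thesis using nondeg_case assms by blast
qed

end
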